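(* Let $(B,\mathscr O)$ be a brace block with $B$ finite. Then for all $\circ,\star\in\mathscr O$, every Galois field extension $L/K$ whose Galois group is isomorphic to $(B,\circ)$ admits a Hopf–Galois structure of type $(B,\star)$.
   Context: A skew left brace is a triple $(B,\cdot,\circ)$ where $(B,\cdot),(B,\circ)$ are groups and $a\circ(b\cdot c)=(a\circ b)\cdot a^{-1}\cdot(a\circ c)$ for all $a,b,c\in B$, with $a^{-1}$ the inverse in $(B,\cdot)$. A brace block is a set $B$ with a collection $\mathscr O$ of binary operations on $B$ such that $(B,\circ,\star)$ is a skew left brace for every $\circ,\star\in\mathscr O$. For a finite Galois extension $L/K$ with group $\Gamma$, a Hopf–Galois structure of type $N$ is (by Greither–Pareigis) one arising as $L[N']^{\Gamma}$ from a regular subgroup $N'\le\operatorname{Perm}(\Gamma)$ isomorphic to $N$ and normalized by the left regular representation $\lambda(\Gamma)$; equivalently a $K$-Hopf algebra $H$ acting on $L$ making $L/K$ an $H$-Hopf–Galois extension with $L\otimes_K H\cong L[N]$. *)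

theory Defs
  imports "HOL-Algebra.Algebra"
begin

text \<open>The group structure on a set B given by a binary operation f
  (the identity is the unique two-sided neutral element, if any).\<close>
definition op_group :: "'b set \<Rightarrow> ('b \<Rightarrow> 'b \<Rightarrow> 'b) \<Rightarrow> 'b monoid" where
  "op_group B f = \<lparr>carrier = B, monoid.mult = f,
     one = (THE e. e \<in> B \<and> (\<forall>x\<in>B. f e x = x \<and> f x e = x))\<rparr>"

definition skew_left_brace :: "'b set \<Rightarrow> ('b \<Rightarrow> 'b \<Rightarrow> 'b) \<Rightarrow> ('b \<Rightarrow> 'b \<Rightarrow> 'b) \<Rightarrow> bool" where
  "skew_left_brace B dot circ \<longleftrightarrow>
     group (op_group B dot) \<and> group (op_group B circ) \<and>
     (\<forall>a\<in>B. \<forall>b\<in>B. \<forall>c\<in>B.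
        circ a (dot b c) = dot (dot (circ a b) (inv\<^bsub>op_group B dot\<^esub> a)) (circ a c))"

definition brace_block :: "'b set \<Rightarrow> ('b \<Rightarrow> 'b \<Rightarrow> 'b) set \<Rightarrow> bool" where
  "brace_block B Ops \<longleftrightarrow> (\<forall>f\<in>Ops. \<forall>g\<in>Ops. skew_left_brace B f g)"

definition gal_auts :: "('a, 'c) ring_scheme \<Rightarrow> 'a set \<Rightarrow> ('a \<Rightarrow> 'a) set" where
  "gal_auts L K = {\<sigma>. \<sigma> \<in> ring_iso L L \<and> \<sigma> \<in> extensional (carrier L) \<and> (\<forall>k\<in>K. \<sigma> k = k)}"

definition Gal :: "('a, 'c) ring_scheme \<Rightarrow> 'a set \<Rightarrow> ('a \<Rightarrow> 'a) monoid" where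
  "Gal L K = \<lparr>carrier = gal_auts L K, monoid.mult = (\<lambda>\<sigma> \<tau>. compose (carrier L) \<sigma> \<tau>),
              one = (\<lambda>x\<in>carrier L. x)\<rparr>"

definition galois_ext :: "('a, 'c) ring_scheme \<Rightarrow> 'a set \<Rightarrow> bool" where
  "galois_ext L K \<longleftrightarrow> field L \<and> subfield K L \<and> ring.finite_dimension L K (carrier L) \<and>
     {x \<in> carrier L. \<forall>\<sigma>\<in>gal_auts L K. \<sigma> x = x} = K"

definition left_reg :: "('g, 'm) monoid_scheme \<Rightarrow> 'g \<Rightarrow> ('g \<Rightarrow> 'g)" where
  "left_reg G g = (\<lambda>x\<in>carrier G. g \<otimes>\<^bsub>G\<^esub> x)"

definition regular_normalized_subgroup :: "('g, 'm) monoid_scheme \<Rightarrow> ('g \<Rightarrow> 'g) set \<Rightarrow> bool" where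
  "regular_normalized_subgroup G N' \<longleftrightarrow>
     subgroup N' (BijGroup (carrier G)) \<and>
     (\<forall>x\<in>carrier G. \<forall>y\<in>carrier G. \<exists>!\<eta>. \<eta> \<in> N' \<and> \<eta> x = y) \<and>
     (\<forall>g\<in>carrier G. \<forall>\<eta>\<in>N'.
        left_reg G g \<otimes>\<^bsub>BijGroup (carrier G)\<^esub> \<eta> \<otimes>\<^bsub>BijGroup (carrier G)\<^esub>
          inv\<^bsub>BijGroup (carrier G)\<^esub> (left_reg G g) \<in> N')"

text \<open>The Galois extension L/K (with group Gamma = Gal(L/K)) admits a Hopf--Galois
  structure of type N, in the Greither--Pareigis description.\<close>
definition has_HGS_of_type :: "('a, 'c) ring_scheme \<Rightarrow> 'a set \<Rightarrow> ('n, 'd) monoid_scheme \<Rightarrow> bool" where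
  "has_HGS_of_type L K N \<longleftrightarrow>
     (\<exists>N'. regular_normalized_subgroup (Gal L K) N' \<and>
           (BijGroup (carrier (Gal L K)))\<lparr>carrier := N'\<rparr> \<cong> N)"

end

theory Submission
  imports Defs
begin

lemma gal_closed:
  assumes "galois_ext L K" "\<sigma> \<in> gal_auts L K" "\<tau> \<in> gal_auts L K"
  shows "compose (carrier L) \<sigma> \<tau> \<in> gal_auts L K"
proof -
  have f: "field L" and sf: "subfield K L" using assms(1) unfolding galois_ext_def by auto
  then have r: "ring L" using field.is_ring by blast
  have KL: "K \<subseteq> carrier L" using subfieldE(3)[OF sf] .
  have s: "\<sigma> \<in> ring_iso L L" "\<sigma> \<in> extensional (carrier L)" "\<forall>k\<in>K. \<sigma> k = k"
    using assms(2) unfolding gal_auts_def by auto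
  have t: "\<tau> \<in> ring_iso L L" "\<tau> \<in> extensional (carrier L)" "\<forall>k\<in>K. \<tau> k = k"
    using assms(3) unfolding gal_auts_def by auto
  have "\<sigma> \<circ> \<tau> \<in> ring_iso L L"
    using s(1) t(1) ring_hom_trans bij_betw_trans unfolding ring_iso_def by blast
  then have "compose (carrier L) \<sigma> \<tau> \<in> ring_iso L L"
    by (rule ring.ring_iso_restrict[OF r]) (simp add: compose_def)
  moreover have "compose (carrier L) \<sigma> \<tau> \<in> extensional (carrier L)"
    by (simp add: compose_def)
  moreover have "\<forall>k\<in>K. compose (carrier L) \<sigma> \<tau> k = k"
    using KL s(3) t(3) by (auto simp: compose_def)
  ultimately show ?thesis unfolding gal_auts_def by blast
qed

definition transp :: "'g set \<Rightarrow> ('g \<Rightarrow> 'b) \<Rightarrow> 'b set \<Rightarrow> ('b \<Rightarrow> 'b) \<Rightarrow> ('g \<Rightarrow> 'g)" where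
  "transp S \<phi> B f = (\<lambda>x\<in>S. inv_into S \<phi> (f (\<phi> x)))"

lemma transp_Bij:
  assumes bij: "bij_betw \<phi> S B"
    and "\<And>y. y \<in> B \<Longrightarrow> f y \<in> B" "\<And>y. y \<in> B \<Longrightarrow> h y \<in> B"
    and "\<And>y. y \<in> B \<Longrightarrow> f (h y) = y" "\<And>y. y \<in> B \<Longrightarrow> h (f y) = y"
  shows "transp S \<phi> B f \<in> Bij S"
proof -
  have p1: "\<And>x. x \<in> S \<Longrightarrow> \<phi> x \<in> B" using bij bij_betwE by blast
  have p2: "\<And>y. y \<in> B \<Longrightarrow> inv_into S \<phi> y \<in> S"
    using bij by (meson bij_betwE bij_betw_inv_into)
  have p3: "\<And>y. y \<in> B \<Longrightarrow> \<phi> (inv_into S \<phi> y) = y"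
    using bij bij_betw_inv_into_right by fastforce
  have p4: "\<And>x. x \<in> S \<Longrightarrow> inv_into S \<phi> (\<phi> x) = x"
    using bij bij_betw_inv_into_left by fastforce
  have "bij_betw (transp S \<phi> B f) S S"
    apply (rule bij_betw_byWitness[where f'="transp S \<phi> B h"])
    using assms p1 p2 p3 p4 by (auto simp: transp_def)
  then show ?thesis unfolding Bij_def transp_def by auto
qed

lemma transp_comp:
  assumes bij: "bij_betw \<phi> S B" and "\<And>y. y \<in> B \<Longrightarrow> g y \<in> B"
  shows "compose S (transp S \<phi> B f) (transp S \<phi> B g) = transp S \<phi> B (\<lambda>y. f (g y))"
proof -
  have p1: "\<And>x. x \<in> S \<Longrightarrow> \<phi> x \<in> B" using bij bij_betwE by blast
  have p2: "\<And>y. y \<in> B \<Longrightarrow> inv_into S \<phi> y \<in> S"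
    using bij by (meson bij_betwE bij_betw_inv_into)
  have p3: "\<And>y. y \<in> B \<Longrightarrow> \<phi> (inv_into S \<phi> y) = y"
    using bij bij_betw_inv_into_right by fastforce
  show ?thesis using assms p1 p2 p3 by (auto simp: transp_def compose_def)
qed

lemma transp_cong:
  assumes bij: "bij_betw \<phi> S B" and "\<And>y. y \<in> B \<Longrightarrow> f y = g y"
  shows "transp S \<phi> B f = transp S \<phi> B g"
proof -
  have p1: "\<And>x. x \<in> S \<Longrightarrow> \<phi> x \<in> B" using bij bij_betwE by blast
  show ?thesis using assms p1 by (auto simp: transp_def)
qed

lemma transp_id:
  assumes bij: "bij_betw \<phi> S B"
  shows "transp S \<phi> B (\<lambda>y. y) = (\<lambda>x\<in>S. x)"
proof -
  have p4: "\<And>x. x \<in> S \<Longrightarrow> inv_into S \<phi> (\<phi> x) = x"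
    using bij bij_betw_inv_into_left by fastforce
  show ?thesis using p4 by (auto simp: transp_def)
qed

lemma op_group_simps [simp]:
  "carrier (op_group B f) = B" "monoid.mult (op_group B f) = f"
  by (simp_all add: op_group_def)

lemma BG_mult: "f \<in> Bij S \<Longrightarrow> g \<in> Bij S \<Longrightarrow> f \<otimes>\<^bsub>BijGroup S\<^esub> g = compose S f g"
  by (simp add: BijGroup_def)

lemma BG_one: "\<one>\<^bsub>BijGroup S\<^esub> = (\<lambda>x\<in>S. x)"
  by (simp add: BijGroup_def)

lemma BG_carrier: "carrier (BijGroup S) = Bij S"
  by (simp add: BijGroup_def)

lemma main_lemma:
  fixes G :: "('g, 'm) monoid_scheme"
  assumes brace: "skew_left_brace B star circ"
    and phi: "\<phi> \<in> iso G (op_group B circ)"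
    and closed: "\<And>x y. x \<in> carrier G \<Longrightarrow> y \<in> carrier G \<Longrightarrow> x \<otimes>\<^bsub>G\<^esub> y \<in> carrier G"
  shows "\<exists>N'. regular_normalized_subgroup G N' \<and> (BijGroup (carrier G))\<lparr>carrier := N'\<rparr> \<cong> op_group B star"
proof -
  define S where "S = carrier G"
  define D where "D = op_group B star"
  define C where "C = op_group B circ"
  define \<psi> where "\<psi> = inv_into S \<phi>"
  define T where "T = transp S \<phi> B"
  define BG where "BG = BijGroup S"
  have gD: "group D" and gC: "group C" using brace unfolding skew_left_brace_def D_def C_def by auto
  have br: "\<And>a b c. a \<in> B \<Longrightarrow> b \<in> B \<Longrightarrow> c \<in> B \<Longrightarrow>
      circ a (star b c) = star (star (circ a b) (inv\<^bsub>D\<^esub> a)) (circ a c)"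
    using brace unfolding skew_left_brace_def D_def by auto
  have bij: "bij_betw \<phi> S B" using phi unfolding iso_def S_def by simp
  have hom: "\<And>x y. x \<in> S \<Longrightarrow> y \<in> S \<Longrightarrow> \<phi> (x \<otimes>\<^bsub>G\<^esub> y) = circ (\<phi> x) (\<phi> y)"
    using phi unfolding iso_def hom_def S_def by simp
  have p1: "\<And>x. x \<in> S \<Longrightarrow> \<phi> x \<in> B" using bij bij_betwE by blast
  have p2: "\<And>y. y \<in> B \<Longrightarrow> \<psi> y \<in> S"
    using bij unfolding \<psi>_def by (meson bij_betwE bij_betw_inv_into)
  have p3: "\<And>y. y \<in> B \<Longrightarrow> \<phi> (\<psi> y) = y"
    using bij unfolding \<psi>_def using bij_betw_inv_into_right by fastforce
  have p4: "\<And>x. x \<in> S \<Longrightarrow> \<psi> (\<phi> x) = x"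
    using bij unfolding \<psi>_def using bij_betw_inv_into_left by fastforce
  have Tapp: "\<And>f x. x \<in> S \<Longrightarrow> T f x = \<psi> (f (\<phi> x))"
    unfolding T_def transp_def \<psi>_def by simp
  have Dm: "\<And>a b. a \<in> B \<Longrightarrow> b \<in> B \<Longrightarrow> star a b \<in> B"
    using group.is_monoid[OF gD] monoid.m_closed unfolding D_def by fastforce
  have Cm: "\<And>a b. a \<in> B \<Longrightarrow> b \<in> B \<Longrightarrow> circ a b \<in> B"
    using group.is_monoid[OF gC] monoid.m_closed unfolding C_def by fastforce
  have Dassoc: "\<And>a b c. a \<in> B \<Longrightarrow> b \<in> B \<Longrightarrow> c \<in> B \<Longrightarrow> star (star a b) c = star a (star b c)"
    using group.is_monoid[OF gD] monoid.m_assoc unfolding D_def by fastforce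
  have Cassoc: "\<And>a b c. a \<in> B \<Longrightarrow> b \<in> B \<Longrightarrow> c \<in> B \<Longrightarrow> circ (circ a b) c = circ a (circ b c)"
    using group.is_monoid[OF gC] monoid.m_assoc unfolding C_def by fastforce
  have Dinv: "\<And>a. a \<in> B \<Longrightarrow> inv\<^bsub>D\<^esub> a \<in> B"
    using group.inv_closed[OF gD] unfolding D_def by fastforce
  have Cinv: "\<And>a. a \<in> B \<Longrightarrow> inv\<^bsub>C\<^esub> a \<in> B"
    using group.inv_closed[OF gC] unfolding C_def by fastforce
  have Dlinv: "\<And>a. a \<in> B \<Longrightarrow> star (inv\<^bsub>D\<^esub> a) a = \<one>\<^bsub>D\<^esub>"
    using group.l_inv[OF gD] unfolding D_def by fastforce
  have Drinv: "\<And>a. a \<in> B \<Longrightarrow> star a (inv\<^bsub>D\<^esub> a) = \<one>\<^bsub>D\<^esub>"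
    using group.r_inv[OF gD] unfolding D_def by fastforce
  have Clinv: "\<And>a. a \<in> B \<Longrightarrow> circ (inv\<^bsub>C\<^esub> a) a = \<one>\<^bsub>C\<^esub>"
    using group.l_inv[OF gC] unfolding C_def by fastforce
  have Crinv: "\<And>a. a \<in> B \<Longrightarrow> circ a (inv\<^bsub>C\<^esub> a) = \<one>\<^bsub>C\<^esub>"
    using group.r_inv[OF gC] unfolding C_def by fastforce
  have Done: "\<one>\<^bsub>D\<^esub> \<in> B" "\<And>a. a \<in> B \<Longrightarrow> star \<one>\<^bsub>D\<^esub> a = a" "\<And>a. a \<in> B \<Longrightarrow> star a \<one>\<^bsub>D\<^esub> = a"
    using group.is_monoid[OF gD] monoid.l_one monoid.r_one monoid.one_closed unfolding D_def by fastforce+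
  have Cone: "\<one>\<^bsub>C\<^esub> \<in> B" "\<And>a. a \<in> B \<Longrightarrow> circ \<one>\<^bsub>C\<^esub> a = a" "\<And>a. a \<in> B \<Longrightarrow> circ a \<one>\<^bsub>C\<^esub> = a"
    using group.is_monoid[OF gC] monoid.l_one monoid.r_one monoid.one_closed unfolding C_def by fastforce+
  have Dcancel: "\<And>a b c. a \<in> B \<Longrightarrow> b \<in> B \<Longrightarrow> c \<in> B \<Longrightarrow> star a c = star b c \<Longrightarrow> a = b"
    using group.right_cancel[OF gD] unfolding D_def by fastforce
  define \<eta> where "\<eta> a = T (star a)" for a
  define \<rho> where "\<rho> c = T (circ c)" for c
  define N' where "N' = \<eta> ` B"
  have gBG: "group BG" unfolding BG_def by (rule group_BijGroup)
  have eta_Bij: "\<eta> a \<in> Bij S" if "a \<in> B" for a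
    unfolding \<eta>_def T_def
    apply (rule transp_Bij[OF bij, where h="star (inv\<^bsub>D\<^esub> a)"])
    using that Dm Dinv Dassoc[symmetric] Dlinv Drinv Done by (auto simp del: )
  have rho_Bij: "\<rho> a \<in> Bij S" if "a \<in> B" for a
    unfolding \<rho>_def T_def
    apply (rule transp_Bij[OF bij, where h="circ (inv\<^bsub>C\<^esub> a)"])
    using that Cm Cinv Cassoc[symmetric] Clinv Crinv Cone by auto
  have eta_mult: "\<eta> a \<otimes>\<^bsub>BG\<^esub> \<eta> b = \<eta> (star a b)" if "a \<in> B" "b \<in> B" for a b
  proof -
    have "\<eta> a \<otimes>\<^bsub>BG\<^esub> \<eta> b = T (\<lambda>y. star a (star b y))"
      unfolding BG_def using BG_mult eta_Bij that transp_comp[OF bij] Dm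
      unfolding \<eta>_def T_def by metis
    also have "\<dots> = \<eta> (star a b)"
      unfolding \<eta>_def T_def by (rule transp_cong[OF bij]) (simp add: that Dassoc)
    finally show ?thesis .
  qed
  have eta_one: "\<eta> \<one>\<^bsub>D\<^esub> = \<one>\<^bsub>BG\<^esub>"
  proof -
    have "\<eta> \<one>\<^bsub>D\<^esub> = T (\<lambda>y. y)"
      unfolding \<eta>_def T_def by (rule transp_cong[OF bij]) (simp add: Done)
    then show ?thesis unfolding T_def BG_def BG_one using transp_id[OF bij] by simp
  qed
  have eta_inv: "inv\<^bsub>BG\<^esub> (\<eta> a) = \<eta> (inv\<^bsub>D\<^esub> a)" if "a \<in> B" for a
    apply (rule group.inv_equality[OF gBG])
    using eta_mult[of "inv\<^bsub>D\<^esub> a" a] that Dinv Dlinv eta_one eta_Bij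
    by (auto simp: BG_def BG_carrier)
  have rho_mult: "\<rho> a \<otimes>\<^bsub>BG\<^esub> \<rho> b = \<rho> (circ a b)" if "a \<in> B" "b \<in> B" for a b
  proof -
    have "\<rho> a \<otimes>\<^bsub>BG\<^esub> \<rho> b = T (\<lambda>y. circ a (circ b y))"
      unfolding BG_def using BG_mult rho_Bij that transp_comp[OF bij] Cm
      unfolding \<rho>_def T_def by metis
    also have "\<dots> = \<rho> (circ a b)"
      unfolding \<rho>_def T_def by (rule transp_cong[OF bij]) (simp add: that Cassoc)
    finally show ?thesis .
  qed
  have rho_one: "\<rho> \<one>\<^bsub>C\<^esub> = \<one>\<^bsub>BG\<^esub>"
  proof -
    have "\<rho> \<one>\<^bsub>C\<^esub> = T (\<lambda>y. y)"
      unfolding \<rho>_def T_def by (rule transp_cong[OF bij]) (simp add: Cone)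
    then show ?thesis unfolding T_def BG_def BG_one using transp_id[OF bij] by simp
  qed
  have rho_inv: "inv\<^bsub>BG\<^esub> (\<rho> a) = \<rho> (inv\<^bsub>C\<^esub> a)" if "a \<in> B" for a
    apply (rule group.inv_equality[OF gBG])
    using rho_mult[of "inv\<^bsub>C\<^esub> a" a] that Cinv Clinv rho_one rho_Bij
    by (auto simp: BG_def BG_carrier)
  have lreg: "left_reg G g = \<rho> (\<phi> g)" if "g \<in> S" for g
  proof
    fix x show "left_reg G g x = \<rho> (\<phi> g) x"
    proof (cases "x \<in> S")
      case True
      have "g \<otimes>\<^bsub>G\<^esub> x = \<psi> (\<phi> (g \<otimes>\<^bsub>G\<^esub> x))" using p4 closed that True S_def by metis
      then show ?thesis using True hom that
        unfolding left_reg_def \<rho>_def by (simp add: Tapp S_def[symmetric])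
    next
      case False
      then show ?thesis unfolding left_reg_def \<rho>_def T_def transp_def S_def by simp
    qed
  qed
  have sub: "subgroup N' BG"
  proof (rule group.subgroupI[OF gBG])
    show "N' \<subseteq> carrier BG" unfolding N'_def BG_def BG_carrier using eta_Bij by auto
    show "N' \<noteq> {}" unfolding N'_def using Done by auto
    show "inv\<^bsub>BG\<^esub> a \<in> N'" if "a \<in> N'" for a
      using that eta_inv Dinv unfolding N'_def by auto
    show "a \<otimes>\<^bsub>BG\<^esub> b \<in> N'" if "a \<in> N'" "b \<in> N'" for a b
      using that eta_mult Dm unfolding N'_def by auto
  qed
  have reg: "\<forall>x\<in>S. \<forall>y\<in>S. \<exists>!e. e \<in> N' \<and> e x = y"
  proof (intro ballI)
    fix x y assume x: "x \<in> S" and y: "y \<in> S"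
    define a where "a = star (\<phi> y) (inv\<^bsub>D\<^esub> (\<phi> x))"
    have aB: "a \<in> B" unfolding a_def using x y p1 Dm Dinv by auto
    have ax: "star a (\<phi> x) = \<phi> y"
      unfolding a_def using x y p1 Dassoc Dinv Dlinv Done by simp
    show "\<exists>!e. e \<in> N' \<and> e x = y"
    proof (rule ex1I[where a="\<eta> a"])
      show "\<eta> a \<in> N' \<and> \<eta> a x = y"
        unfolding N'_def using aB x y ax p4 by (simp add: \<eta>_def Tapp)
      fix e assume e: "e \<in> N' \<and> e x = y"
      then obtain b where b: "b \<in> B" "e = \<eta> b" unfolding N'_def by auto
      have "\<psi> (star b (\<phi> x)) = y" using e b x by (simp add: \<eta>_def Tapp)
      then have "star b (\<phi> x) = \<phi> y" using p3 b x p1 Dm by metis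
      then have "b = a" using Dcancel[of b a "\<phi> x"] ax b aB x p1 by simp
      then show "e = \<eta> a" using b by simp
    qed
  qed
  have norm: "\<forall>g\<in>S. \<forall>e\<in>N'. left_reg G g \<otimes>\<^bsub>BG\<^esub> e \<otimes>\<^bsub>BG\<^esub> inv\<^bsub>BG\<^esub> (left_reg G g) \<in> N'"
  proof (intro ballI)
    fix g e assume g: "g \<in> S" and e: "e \<in> N'"
    then obtain a where a: "a \<in> B" "e = \<eta> a" unfolding N'_def by auto
    define c where "c = \<phi> g"
    have c: "c \<in> B" unfolding c_def using g p1 by simp
    have "left_reg G g \<otimes>\<^bsub>BG\<^esub> e \<otimes>\<^bsub>BG\<^esub> inv\<^bsub>BG\<^esub> (left_reg G g)
        = \<rho> c \<otimes>\<^bsub>BG\<^esub> \<eta> a \<otimes>\<^bsub>BG\<^esub> \<rho> (inv\<^bsub>C\<^esub> c)"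
      using lreg g a rho_inv c unfolding c_def by simp
    also have "\<dots> = T (\<lambda>y. circ c (star a (circ (inv\<^bsub>C\<^esub> c) y)))"
    proof -
      have "\<rho> c \<otimes>\<^bsub>BG\<^esub> \<eta> a = T (\<lambda>y. circ c (star a y))"
        unfolding BG_def using BG_mult rho_Bij eta_Bij a c transp_comp[OF bij] Dm
        unfolding \<rho>_def \<eta>_def T_def by metis
      moreover have "\<rho> c \<otimes>\<^bsub>BG\<^esub> \<eta> a \<in> Bij S"
        unfolding BG_def using BG_mult[OF rho_Bij[OF c] eta_Bij[OF a(1)]]
          compose_Bij[OF rho_Bij[OF c] eta_Bij[OF a(1)]] by simp
      ultimately have b1: "T (\<lambda>y. circ c (star a y)) \<in> Bij S" by metis
      have ci: "inv\<^bsub>C\<^esub> c \<in> B" using Cinv c by simp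
      have "T (\<lambda>y. circ c (star a y)) \<otimes>\<^bsub>BG\<^esub> \<rho> (inv\<^bsub>C\<^esub> c)
          = compose S (T (\<lambda>y. circ c (star a y))) (T (circ (inv\<^bsub>C\<^esub> c)))"
        unfolding BG_def using BG_mult[OF b1 rho_Bij[OF ci]] by (simp add: \<rho>_def)
      also have "\<dots> = T (\<lambda>y. circ c (star a (circ (inv\<^bsub>C\<^esub> c) y)))"
        unfolding T_def by (rule transp_comp[OF bij]) (simp add: Cm ci)
      finally show ?thesis using \<open>\<rho> c \<otimes>\<^bsub>BG\<^esub> \<eta> a = T (\<lambda>y. circ c (star a y))\<close> by simp
    qed
    also have "\<dots> = \<eta> (star (circ c a) (inv\<^bsub>D\<^esub> c))"
      unfolding \<eta>_def T_def
    proof (rule transp_cong[OF bij])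
      fix y assume y: "y \<in> B"
      have "circ c (star a (circ (inv\<^bsub>C\<^esub> c) y))
          = star (star (circ c a) (inv\<^bsub>D\<^esub> c)) (circ c (circ (inv\<^bsub>C\<^esub> c) y))"
        using br a c y Cinv Cm by simp
      also have "circ c (circ (inv\<^bsub>C\<^esub> c) y) = y"
        using c y Cinv Cassoc[symmetric] Crinv Cone by simp
      finally show "circ c (star a (circ (inv\<^bsub>C\<^esub> c) y)) = star (star (circ c a) (inv\<^bsub>D\<^esub> c)) y" .
    qed
    also have "\<dots> \<in> N'" unfolding N'_def using a c Cm Dm Dinv by auto
    finally show "left_reg G g \<otimes>\<^bsub>BG\<^esub> e \<otimes>\<^bsub>BG\<^esub> inv\<^bsub>BG\<^esub> (left_reg G g) \<in> N'" .
  qed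
  have rns: "regular_normalized_subgroup G N'"
    unfolding regular_normalized_subgroup_def using sub reg norm
    unfolding BG_def S_def by blast
  have Snonempty: "\<psi> \<one>\<^bsub>D\<^esub> \<in> S" using p2 Done by simp
  have "\<eta> \<in> iso D (BG\<lparr>carrier := N'\<rparr>)"
  proof (rule isoI)
    show "\<eta> \<in> hom D (BG\<lparr>carrier := N'\<rparr>)"
      unfolding hom_def N'_def D_def using eta_mult by auto
    have "inj_on \<eta> B"
    proof
      fix a b assume a: "a \<in> B" and b: "b \<in> B" and eq: "\<eta> a = \<eta> b"
      define x where "x = \<psi> \<one>\<^bsub>D\<^esub>"
      have x: "x \<in> S" using Snonempty x_def by simp
      have "\<psi> (star a (\<phi> x)) = \<psi> (star b (\<phi> x))" using eq x by (metis Tapp \<eta>_def)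
      then have "star a (\<phi> x) = star b (\<phi> x)" using p3 a b x p1 Dm by metis
      then show "a = b" using Dcancel a b x p1 by blast
    qed
    then show "bij_betw \<eta> (carrier D) (carrier (BG\<lparr>carrier := N'\<rparr>))"
      unfolding bij_betw_def N'_def D_def by simp
  qed
  then have "D \<cong> BG\<lparr>carrier := N'\<rparr>" by (rule is_isoI)
  then have "BG\<lparr>carrier := N'\<rparr> \<cong> D" by (rule group.iso_sym[OF gD])
  then have h1: "BijGroup (carrier G)\<lparr>carrier := N'\<rparr> \<cong> op_group B star"
    unfolding BG_def S_def D_def .
  show ?thesis by (rule exI[of _ N'], rule conjI[OF rns h1])
qed

theorem proposition5p1:
  fixes B :: "'b set" and Ops :: "('b \<Rightarrow> 'b \<Rightarrow> 'b) set"
    and circ star :: "'b \<Rightarrow> 'b \<Rightarrow> 'b"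
    and L :: "('a, 'c) ring_scheme" and K :: "'a set"
  assumes "brace_block B Ops" and "finite B"
    and "circ \<in> Ops" and "star \<in> Ops"
    and "galois_ext L K"
    and "Gal L K \<cong> op_group B circ"
  shows "has_HGS_of_type L K (op_group B star)"
proof -
  have br: "skew_left_brace B star circ" using assms(1,3,4) unfolding brace_block_def by blast
  obtain \<phi> where phi: "\<phi> \<in> iso (Gal L K) (op_group B circ)" using assms(6) unfolding is_iso_def by blast
  have cl: "\<And>x y. x \<in> carrier (Gal L K) \<Longrightarrow> y \<in> carrier (Gal L K) \<Longrightarrow> x \<otimes>\<^bsub>Gal L K\<^esub> y \<in> carrier (Gal L K)"
    using gal_closed[OF assms(5)] by (simp add: Gal_def)
  show ?thesis unfolding has_HGS_of_type_def using main_lemma[OF br phi cl] .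
qed

end
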